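(* Let $F:\mathbb{C}^n\to\mathbb{C}^n$ be a polynomial map of the form $F=\mathrm{Id}+H$, i.e. $F_i=X_i+H_i(X_1,\dots,X_n)$, where each $H_i$ is a polynomial of lower degree $d_i\ge2$, $1\le i\le n$. For each $i$, let $(P_k^i)_{k\ge0}$ be defined by $P_0^i=X_i$ and $P_k^i(X)=P_{k-1}^i(F_1,\dots,F_n)-P_{k-1}^i(X_1,\dots,X_n)$ for $k\ge1$. Then the following are equivalent: (a) $F$ is a quasi-translation; (b) $JH\cdot H=0$, where $JH=(\partial H_i/\partial X_j)_{i,j}$ is the Jacobian matrix of $H$ and $H$ is viewed as a column vector; (c) $P_2^i=0$ for all $1\le i\le n$.
   Context: A polynomial map $F=\mathrm{Id}+H:\mathbb{C}^n\to\mathbb{C}^n$ is a quasi-translation if it is invertible with polynomial inverse $F^{-1}=\mathrm{Id}-H$. The lower degree of a nonzero polynomial is the smallest degree of its nonzero homogeneous components. *)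

theory Defs
  imports "HOL-Analysis.Analysis"
begin

text \<open>A monomial is an exponent vector m :: 'n \<Rightarrow> nat, of total degree sum m UNIV.
  A coefficient function c with finite support represents the polynomial
  sum_m c m * X^m; over C a polynomial is determined by its polynomial function.\<close>

definition monom_eval :: "('n::finite \<Rightarrow> nat) \<Rightarrow> complex^'n \<Rightarrow> complex" where
  "monom_eval m x = (\<Prod>i\<in>UNIV. (x $ i) ^ m i)"

definition represents :: "(('n::finite \<Rightarrow> nat) \<Rightarrow> complex) \<Rightarrow> (complex^'n \<Rightarrow> complex) \<Rightarrow> bool" where
  "represents c f \<longleftrightarrow> finite {m. c m \<noteq> 0} \<and>
     (\<forall>x. f x = (\<Sum>m\<in>{m. c m \<noteq> 0}. c m * monom_eval m x))"

text \<open>f is a polynomial all of whose nonzero homogeneous components have degree \<ge> d,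
  i.e. f = 0 or f is a nonzero polynomial of lower degree \<ge> d.\<close>
definition poly_lower_degree_ge :: "(complex^'n::finite \<Rightarrow> complex) \<Rightarrow> nat \<Rightarrow> bool" where
  "poly_lower_degree_ge f d \<longleftrightarrow>
     (\<exists>c. represents c f \<and> (\<forall>m. c m \<noteq> 0 \<longrightarrow> d \<le> sum m UNIV))"

text \<open>Quasi-translation: F = Id + H is invertible with inverse Id - H.\<close>
definition quasi_translation :: "(complex^'n::finite \<Rightarrow> complex^'n) \<Rightarrow> bool" where
  "quasi_translation H \<longleftrightarrow>
     (\<forall>x. (x + H x) - H (x + H x) = x \<and> (x - H x) + H (x - H x) = x)"

definition jacobian :: "(complex^'n::finite \<Rightarrow> complex^'n) \<Rightarrow> complex^'n \<Rightarrow> complex^'n^'n" where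
  "jacobian H x = (\<chi> i j. deriv (\<lambda>t. H (\<chi> k. if k = j then t else x $ k) $ i) (x $ j))"

primrec Pseq :: "(complex^'n::finite \<Rightarrow> complex^'n) \<Rightarrow> nat \<Rightarrow> 'n \<Rightarrow> complex^'n \<Rightarrow> complex" where
  "Pseq F 0 i = (\<lambda>x. x $ i)"
| "Pseq F (Suc k) i = (\<lambda>x. Pseq F k i (F x) - Pseq F k i x)"

end

theory Submission imports Defs "HOL-Computational_Algebra.Polynomial" begin

definition pm :: "('n::finite \<Rightarrow> nat) \<Rightarrow> 'n \<Rightarrow> complex^'n \<Rightarrow> complex" where
  "pm m j y = of_nat (m j) * y$j ^ (m j - 1) * (\<Prod>i\<in>UNIV-{j}. y$i ^ m i)"

definition line :: "complex^'n::finite \<Rightarrow> complex^'n \<Rightarrow> complex \<Rightarrow> complex^'n" where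
  "line x v t = (\<chi> k. x$k + t * v$k)"

lemma monom_partial:
  fixes y :: "complex^'n::finite"
  shows "((\<lambda>s. monom_eval m (\<chi> k. if k = j then s else y$k)) has_field_derivative pm m j y) (at (y$j))"
proof -
  have d: "((\<lambda>s. \<Prod>i\<in>UNIV. (\<lambda>i s. (if i = j then s else y$i) ^ m i) i s) has_field_derivative
      (\<Sum>i\<in>UNIV. (if i = j then of_nat (m j) * (y$j) ^ (m j - 1) else 0) *
         (\<Prod>l\<in>UNIV-{i}. (if l = j then y$j else y$l) ^ m l))) (at (y$j))"
  proof (rule has_field_derivative_prod)
    fix i :: 'n assume "i \<in> UNIV"
    show "((\<lambda>s. (if i = j then s else y$i) ^ m i) has_field_derivative
       (if i = j then of_nat (m j) * (y$j) ^ (m j - 1) else 0)) (at (y$j))"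
      by (cases "i = j") (auto intro!: derivative_eq_intros)
  qed
  have e1: "(\<Sum>i\<in>UNIV. (if i = j then of_nat (m j) * (y$j) ^ (m j - 1) else 0) *
         (\<Prod>l\<in>UNIV-{i}. (if l = j then y$j else y$l) ^ m l))
      = (\<Sum>i\<in>UNIV. if i = j then of_nat (m j) * (y$j) ^ (m j - 1) *
         (\<Prod>l\<in>UNIV-{j}. (if l = j then y$j else y$l) ^ m l) else 0)"
    by (rule sum.cong) auto
  have e2: "(\<Prod>l\<in>UNIV-{j}. (if l = j then y$j else y$l) ^ m l) = (\<Prod>l\<in>UNIV-{j}. y$l ^ m l)"
    by (rule prod.cong) auto
  have e3: "(\<lambda>s. monom_eval m (\<chi> k. if k = j then s else y$k)) = 
     (\<lambda>s. \<Prod>i\<in>UNIV. (\<lambda>i s. (if i = j then s else y$i) ^ m i) i s)"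
    by (simp add: monom_eval_def)
  show ?thesis using d unfolding e3 e1 e2 by (simp add: pm_def)
qed

lemma monom_line:
  fixes x v :: "complex^'n::finite"
  shows "((\<lambda>t. monom_eval m (line x v t)) has_field_derivative (\<Sum>j\<in>UNIV. v$j * pm m j (line x v t))) (at t)"
proof -
  have "((\<lambda>t. \<Prod>i\<in>UNIV. (\<lambda>i t. (x$i + t * v$i) ^ m i) i t) has_field_derivative
      (\<Sum>i\<in>UNIV. (of_nat (m i) * (x$i + t * v$i) ^ (m i - 1) * v$i) *
         (\<Prod>l\<in>UNIV-{i}. (x$l + t * v$l) ^ m l))) (at t)"
    by (rule has_field_derivative_prod) (auto intro!: derivative_eq_intros)
  moreover have "(\<lambda>t. monom_eval m (line x v t)) = (\<lambda>t. \<Prod>i\<in>UNIV. (\<lambda>i t. (x$i + t * v$i) ^ m i) i t)"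
    by (simp add: monom_eval_def line_def)
  moreover have "(\<Sum>i\<in>UNIV. (of_nat (m i) * (x$i + t * v$i) ^ (m i - 1) * v$i) *
         (\<Prod>l\<in>UNIV-{i}. (x$l + t * v$l) ^ m l)) = (\<Sum>j\<in>UNIV. v$j * pm m j (line x v t))"
    by (rule sum.cong) (simp_all add: pm_def line_def)
  ultimately show ?thesis by simp
qed


definition pf :: "(('n::finite \<Rightarrow> nat) \<Rightarrow> complex) \<Rightarrow> 'n \<Rightarrow> complex^'n \<Rightarrow> complex" where
  "pf c j y = (\<Sum>m\<in>{m. c m \<noteq> 0}. c m * pm m j y)"

lemma rep_partial:
  assumes "represents c f"
  shows "((\<lambda>s. f (\<chi> k. if k = j then s else y$k)) has_field_derivative pf c j y) (at (y$j))"
proof -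
  from assms have fin: "finite {m. c m \<noteq> 0}" and f: "\<And>x. f x = (\<Sum>m\<in>{m. c m \<noteq> 0}. c m * monom_eval m x)"
    by (auto simp: represents_def)
  have "((\<lambda>s. \<Sum>m\<in>{m. c m \<noteq> 0}. c m * monom_eval m (\<chi> k. if k = j then s else y$k)) has_field_derivative
     (\<Sum>m\<in>{m. c m \<noteq> 0}. c m * pm m j y)) (at (y$j))"
    by (intro DERIV_sum DERIV_cmult monom_partial)
  thus ?thesis by (simp add: f pf_def)
qed

lemma rep_line:
  assumes "represents c f"
  shows "((\<lambda>t. f (line x v t)) has_field_derivative (\<Sum>j\<in>UNIV. v$j * pf c j (line x v t))) (at t)"
proof -
  from assms have fin: "finite {m. c m \<noteq> 0}" and f: "\<And>x. f x = (\<Sum>m\<in>{m. c m \<noteq> 0}. c m * monom_eval m x)"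
    by (auto simp: represents_def)
  have "((\<lambda>t. \<Sum>m\<in>{m. c m \<noteq> 0}. c m * monom_eval m (line x v t)) has_field_derivative
     (\<Sum>m\<in>{m. c m \<noteq> 0}. c m * (\<Sum>j\<in>UNIV. v$j * pm m j (line x v t)))) (at t)"
    by (intro DERIV_sum DERIV_cmult monom_line)
  moreover have "(\<Sum>m\<in>{m. c m \<noteq> 0}. c m * (\<Sum>j\<in>UNIV. v$j * pm m j (line x v t)))
     = (\<Sum>j\<in>UNIV. v$j * pf c j (line x v t))"
    by (simp add: pf_def sum_distrib_left mult_ac sum.swap[of _ "{m. c m \<noteq> 0}"])
  ultimately show ?thesis by (simp add: f)
qed

definition polyfun :: "(complex \<Rightarrow> complex) \<Rightarrow> bool" where
  "polyfun g \<longleftrightarrow> (\<exists>p. poly p = g)"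

lemma polyfun_const: "polyfun (\<lambda>t. a)"
  unfolding polyfun_def by (rule exI[of _ "[:a:]"]) auto

lemma polyfun_lin: "polyfun (\<lambda>t. a + t * b)"
  unfolding polyfun_def by (rule exI[of _ "[:a, b:]"]) (auto simp: mult_ac)

lemma polyfun_add: "polyfun f \<Longrightarrow> polyfun g \<Longrightarrow> polyfun (\<lambda>t. f t + g t)"
  unfolding polyfun_def by (metis poly_add)

lemma polyfun_diff: "polyfun f \<Longrightarrow> polyfun g \<Longrightarrow> polyfun (\<lambda>t. f t - g t)"
  unfolding polyfun_def by (metis poly_diff)

lemma polyfun_mult: "polyfun f \<Longrightarrow> polyfun g \<Longrightarrow> polyfun (\<lambda>t. f t * g t)"
  unfolding polyfun_def by (metis poly_mult)

lemma polyfun_power: "polyfun f \<Longrightarrow> polyfun (\<lambda>t. f t ^ n)"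
  by (induction n) (auto intro: polyfun_mult polyfun_const)

lemma polyfun_sum: "(\<And>a. a \<in> A \<Longrightarrow> polyfun (f a)) \<Longrightarrow> polyfun (\<lambda>t. \<Sum>a\<in>A. f a t)"
  by (induction A rule: infinite_finite_induct) (auto intro: polyfun_add polyfun_const)

lemma polyfun_prod: "(\<And>a. a \<in> A \<Longrightarrow> polyfun (f a)) \<Longrightarrow> polyfun (\<lambda>t. \<Prod>a\<in>A. f a t)"
  by (induction A rule: infinite_finite_induct) (auto intro: polyfun_mult polyfun_const)

lemma polyfun_rep_line:
  assumes "represents c f"
  shows "polyfun (\<lambda>t. f (line x v t))"
proof -
  from assms have f: "\<And>x. f x = (\<Sum>m\<in>{m. c m \<noteq> 0}. c m * monom_eval m x)"
    by (auto simp: represents_def)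
  show ?thesis unfolding f monom_eval_def line_def
    by (auto intro!: polyfun_sum polyfun_mult polyfun_const polyfun_prod polyfun_power polyfun_lin)
qed

lemma polyfun_pf_line: "polyfun (\<lambda>t. pf c j (line x v t))"
  unfolding pf_def pm_def line_def
  by (auto intro!: polyfun_sum polyfun_mult polyfun_const polyfun_prod polyfun_power polyfun_lin)

lemma coeff_zero_lemma:
  fixes W :: "'n::finite \<Rightarrow> complex poly" and A :: "'n \<Rightarrow> 'n \<Rightarrow> complex poly"
  assumes "\<And>i. coeff (W i) 0 = 0"
    and "\<And>i. pderiv (W i) = - (\<Sum>j\<in>UNIV. A i j * W j)"
  shows "W i = 0"
proof -
  have "\<forall>i. coeff (W i) n = 0" for n
  proof (induction n rule: less_induct)
    case (less n)
    show ?case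
    proof (cases n)
      case 0 thus ?thesis using assms(1) by simp
    next
      case (Suc k)
      show ?thesis
      proof
        fix i
        have "coeff (pderiv (W i)) k = - (\<Sum>j\<in>UNIV. \<Sum>a\<le>k. coeff (A i j) a * coeff (W j) (k - a))"
          by (simp add: assms(2) coeff_sum coeff_mult)
        also have "\<dots> = 0"
          using less.IH Suc by (auto intro!: sum.neutral)
        finally have "of_nat (Suc k) * coeff (W i) (Suc k) = 0"
          by (simp add: coeff_pderiv)
        thus "coeff (W i) n = 0" using Suc by (simp del: of_nat_Suc)
      qed
    qed
  qed
  thus ?thesis by (simp add: poly_eq_iff)
qed

lemma poly_nat_roots:
  fixes p :: "complex poly"
  assumes "\<And>n::nat. poly p (of_nat n) = 0"
  shows "p = 0"
proof (rule ccontr)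
  assume "p \<noteq> 0"
  hence "finite {x. poly p x = 0}" by (rule poly_roots_finite)
  moreover have "range (of_nat :: nat \<Rightarrow> complex) \<subseteq> {x. poly p x = 0}" using assms by auto
  ultimately have "finite (range (of_nat :: nat \<Rightarrow> complex))" by (rule rev_finite_subset)
  hence "finite (UNIV :: nat set)" using finite_imageD inj_of_nat by blast
  thus False by simp
qed


lemma line0: "line x v 0 = x" by (simp add: line_def vec_eq_iff)
lemma line1: "line x v 1 = x + v" by (simp add: line_def vec_eq_iff)
lemma linem1: "line x v (-1) = x - v" by (simp add: line_def vec_eq_iff)
lemma lineSuc: "line x v (of_nat (Suc n)) = line x v (of_nat n) + v"
  by (simp add: line_def vec_eq_iff algebra_simps)

theorem proposition2p7:
  fixes H :: "complex^'n \<Rightarrow> complex^'n"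
  assumes "\<And>i. poly_lower_degree_ge (\<lambda>x. H x $ i) 2"
  shows "(quasi_translation H \<longleftrightarrow> (\<forall>x. jacobian H x *v H x = 0))
       \<and> ((\<forall>x. jacobian H x *v H x = 0) \<longleftrightarrow> (\<forall>i. Pseq (\<lambda>x. x + H x) 2 i = (\<lambda>x. 0)))"
proof -
  have "\<forall>i. \<exists>c. represents c (\<lambda>x. H x $ i)"
    using assms unfolding poly_lower_degree_ge_def by blast
  then obtain C where rep: "\<And>i. represents (C i) (\<lambda>x. H x $ i)" by metis
  have jac: "jacobian H y $ i $ j = pf (C i) j y" for y i j
    unfolding jacobian_def using rep_partial[OF rep[of i], of j y]
    by (simp add: DERIV_imp_deriv)
  have lined: "((\<lambda>t. H (line x v t) $ i) has_field_derivative (jacobian H (line x v t) *v v) $ i) (at t)" for x v t i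
    using rep_line[OF rep[of i], of x v t]
    by (simp add: matrix_vector_mult_def jac mult_ac)
  define Q where "Q \<longleftrightarrow> (\<forall>x. H (x + H x) = H x)"
  have Qline: "H (line x (H x) t) = H x" if Q for x t
  proof -
    have nat: "H (line x (H x) (of_nat n)) = H x" for n
    proof (induction n)
      case 0 thus ?case by (simp add: line0)
    next
      case (Suc n)
      have "H (line x (H x) (of_nat (Suc n))) = H (line x (H x) (of_nat n) + H (line x (H x) (of_nat n)))"
        unfolding lineSuc Suc.IH ..
      also have "\<dots> = H (line x (H x) (of_nat n))" using \<open>Q\<close> by (simp add: Q_def)
      finally show ?case using Suc by simp
    qed
    have "H (line x (H x) t) $ i = H x $ i" for i
    proof -
      have "polyfun (\<lambda>t. H (line x (H x) t) $ i - H x $ i)"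
        by (intro polyfun_diff polyfun_rep_line[OF rep] polyfun_const)
      then obtain p where p: "poly p = (\<lambda>t. H (line x (H x) t) $ i - H x $ i)"
        unfolding polyfun_def by blast
      have "p = 0" by (rule poly_nat_roots) (simp add: p nat)
      hence "poly p t = 0" by simp
      thus ?thesis by (simp add: p)
    qed
    thus ?thesis by (simp add: vec_eq_iff)
  qed
  have QB: "jacobian H x *v H x = 0" if Q for x
  proof -
    have "(jacobian H x *v H x) $ i = 0" for i
    proof -
      have "((\<lambda>t. H (line x (H x) t) $ i) has_field_derivative (jacobian H x *v H x) $ i) (at 0)"
        using lined[where x=x and v="H x" and t=0 and i=i] by (simp add: line0)
      moreover have "((\<lambda>t. H (line x (H x) t) $ i) has_field_derivative 0) (at 0)"
        using Qline[OF \<open>Q\<close>] by simp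
      ultimately show ?thesis by (rule DERIV_unique)
    qed
    thus ?thesis by (simp add: vec_eq_iff)
  qed
  have BQ: Q if B: "\<forall>y. jacobian H y *v H y = 0"
  proof -
    have "H (x + H x) = H x" for x
    proof -
      define v where "v = H x"
      have "\<forall>i. \<exists>p. poly p = (\<lambda>t. H (line x v t) $ i - v $ i)"
        using polyfun_diff[OF polyfun_rep_line[OF rep] polyfun_const] unfolding polyfun_def by blast
      then obtain W where W: "\<And>i. poly (W i) = (\<lambda>t. H (line x v t) $ i - v $ i)" by metis
      have "\<forall>i j. \<exists>p. poly p = (\<lambda>t. pf (C i) j (line x v t))"
        using polyfun_pf_line unfolding polyfun_def by blast
      then obtain A where A: "\<And>i j. poly (A i j) = (\<lambda>t. pf (C i) j (line x v t))" by metis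
      have W0: "coeff (W i) 0 = 0" for i
        using fun_cong[OF W[of i], of 0] by (simp add: poly_0_coeff_0 line0 v_def)
      have WD: "pderiv (W i) = - (\<Sum>j\<in>UNIV. A i j * W j)" for i
      proof (rule poly_eq_poly_eq_iff[THEN iffD1], rule ext)
        fix t
        let ?y = "line x v t"
        have d1: "((\<lambda>t. poly (W i) t) has_field_derivative poly (pderiv (W i)) t) (at t)" by simp
        have d2: "((\<lambda>t. poly (W i) t) has_field_derivative (jacobian H ?y *v v) $ i) (at t)"
          unfolding W using lined[where x=x and v=v and t=t and i=i] by (auto intro!: derivative_eq_intros)
        have "poly (pderiv (W i)) t = (jacobian H ?y *v v) $ i" using DERIV_unique[OF d1 d2] .
        also have "\<dots> = (jacobian H ?y *v v) $ i - (jacobian H ?y *v H ?y) $ i" using B by simp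
        also have "\<dots> = - (\<Sum>j\<in>UNIV. pf (C i) j ?y * (H ?y $ j - v $ j))"
          by (simp add: matrix_vector_mult_def jac sum_subtractf[symmetric] algebra_simps sum_negf[symmetric])
        also have "\<dots> = poly (- (\<Sum>j\<in>UNIV. A i j * W j)) t"
          by (simp add: poly_sum A W)
        finally show "poly (pderiv (W i)) t = poly (- (\<Sum>j\<in>UNIV. A i j * W j)) t" .
      qed
      have "W i = 0" for i by (rule coeff_zero_lemma[OF W0 WD])
      hence "H (line x v 1) $ i = v $ i" for i using fun_cong[OF W[of i], of 1] by simp
      thus ?thesis by (simp add: vec_eq_iff line1 v_def)
    qed
    thus ?thesis by (simp add: Q_def)
  qed
  have QT: "quasi_translation H \<longleftrightarrow> Q"
  proof
    assume "quasi_translation H"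
    hence "x + H x - H (x + H x) = x" for x by (simp add: quasi_translation_def)
    hence "H (x + H x) = H x" for x by (metis add_diff_cancel_left' diff_diff_eq2 diff_eq_diff_eq)
    thus Q by (simp add: Q_def)
  next
    assume Q
    have "H (x - H x) = H x" for x using Qline[OF \<open>Q\<close>, of x "-1"] by (simp add: linem1)
    thus "quasi_translation H" using \<open>Q\<close> by (simp add: quasi_translation_def Q_def)
  qed
  have PQ: "(\<forall>i. Pseq (\<lambda>x. x + H x) 2 i = (\<lambda>x. 0)) \<longleftrightarrow> Q"
  proof -
    have "Pseq (\<lambda>x. x + H x) 2 i x = H (x + H x) $ i - H x $ i" for i x
      by (simp add: numeral_2_eq_2)
    hence "(\<forall>i. Pseq (\<lambda>x. x + H x) 2 i = (\<lambda>x. 0)) \<longleftrightarrow> (\<forall>i x. H (x + H x) $ i = H x $ i)"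
      by (auto simp: fun_eq_iff)
    also have "\<dots> \<longleftrightarrow> Q" by (auto simp: Q_def vec_eq_iff)
    finally show ?thesis .
  qed
  show ?thesis using QT PQ QB BQ by blast
qed

end
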